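(* Let $n\ge 2$. For every $(f,\nu)\in\mathrm{Imm}_1(S^{n-1},\mathbb{R}^{2n-1})$ there exists $(h,\mu)\in\mathrm{Emb}_1(S^{n-1},\mathbb{R}^{2n-1})$ that lies in the same path-component of $\mathrm{Imm}_1(S^{n-1},\mathbb{R}^{2n-1})$ as $(f,\nu)$.
   Context: $\mathrm{Imm}_1(S^{n-1},\mathbb{R}^{2n-1})$ is the space of pairs $(l,\nu)$ where $l\colon S^{n-1}\to\mathbb{R}^{2n-1}$ is a $C^\infty$ immersion and $\nu$ is a vector field along $l$ transversal to $l$ (i.e. $\nu(x)\notin dl(T_xS^{n-1})$), topologized with the $C^1$ topology on immersions and the compact-open topology on fields. $\mathrm{Emb}_1(S^{n-1},\mathbb{R}^{2n-1})$ is the subspace of pairs with $l$ an embedding. *)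

theory Defs
  imports "HOL-Analysis.Analysis"
begin

fun dd :: "('a::real_normed_vector \<Rightarrow> 'b::real_normed_vector) \<Rightarrow> 'a list \<Rightarrow> 'a \<Rightarrow> 'b" where
  "dd f [] = f"
| "dd f (v # vs) = (\<lambda>x. frechet_derivative (dd f vs) (at x) v)"

text \<open>C-infinity on an open set: all iterated derivatives exist (and hence are continuous).\<close>
definition smooth_on :: "'a::real_normed_vector set \<Rightarrow> ('a \<Rightarrow> 'b::real_normed_vector) \<Rightarrow> bool" where
  "smooth_on U f \<longleftrightarrow> (\<forall>vs. \<forall>x\<in>U. dd f vs differentiable (at x))"

abbreviation Sph :: "(real^'n) set" where
  "Sph \<equiv> sphere 0 1"

definition radext :: "(real^'n \<Rightarrow> 'b) \<Rightarrow> real^'n \<Rightarrow> 'b" where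
  "radext l = (\<lambda>y. l (scaleR (1 / norm y) y))"

text \<open>Differential of l at x in S (applied to a tangent vector v, i.e. v \<bullet> x = 0).\<close>
definition dmap :: "(real^'n \<Rightarrow> real^'m) \<Rightarrow> real^'n \<Rightarrow> real^'n \<Rightarrow> real^'m" where
  "dmap l x v = frechet_derivative (radext l) (at x) v"

definition tangent :: "real^'n \<Rightarrow> (real^'n) set" where
  "tangent x = {v. v \<bullet> x = 0}"

text \<open>Maps are normalised to be 0 off
  the sphere, so that a pair is determined by its restriction to the sphere.\<close>
definition Imm1 :: "((real^'n \<Rightarrow> real^'m) \<times> (real^'n \<Rightarrow> real^'m)) set" where
  "Imm1 = {(l, \<nu>).
      (\<forall>x. x \<notin> Sph \<longrightarrow> l x = 0 \<and> \<nu> x = 0)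
    \<and> smooth_on (- {0}) (radext l)
    \<and> (\<forall>x\<in>Sph. \<forall>v\<in>tangent x. v \<noteq> 0 \<longrightarrow> dmap l x v \<noteq> 0)
    \<and> continuous_on Sph \<nu>
    \<and> (\<forall>x\<in>Sph. \<nu> x \<notin> dmap l x ` tangent x)}"

definition Emb1 :: "((real^'n \<Rightarrow> real^'m) \<times> (real^'n \<Rightarrow> real^'m)) set" where
  "Emb1 = {(l, \<nu>) \<in> Imm1. inj_on l Sph}"

text \<open>C^1 distance on immersions plus uniform (= compact-open, the sphere being compact)
  distance on fields.\<close>
definition imm_dist ::
  "((real^'n \<Rightarrow> real^'m) \<times> (real^'n \<Rightarrow> real^'m)) \<Rightarrow>
   ((real^'n \<Rightarrow> real^'m) \<times> (real^'n \<Rightarrow> real^'m)) \<Rightarrow> real" where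
  "imm_dist p q =
     (SUP x\<in>Sph. norm (fst p x - fst q x))
   + (SUP xv\<in>{(x, v). x \<in> Sph \<and> v \<in> tangent x \<and> norm v \<le> 1}.
        norm (dmap (fst p) (fst xv) (snd xv) - dmap (fst q) (fst xv) (snd xv)))
   + (SUP x\<in>Sph. norm (snd p x - snd q x))"

definition imm_open :: "((real^'n \<Rightarrow> real^'m) \<times> (real^'n \<Rightarrow> real^'m)) set \<Rightarrow> bool" where
  "imm_open U \<longleftrightarrow> U \<subseteq> Imm1 \<and>
     (\<forall>p\<in>U. \<exists>e>0. \<forall>q\<in>Imm1. imm_dist q p < e \<longrightarrow> q \<in> U)"

lemma istopology_imm_open:
  "istopology (imm_open :: ((real^'n \<Rightarrow> real^'m) \<times> (real^'n \<Rightarrow> real^'m)) set \<Rightarrow> bool)"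
proof -
  have 1: "imm_open (S \<inter> T)" if a: "imm_open S" "imm_open T"
    for S T :: "((real^'n \<Rightarrow> real^'m) \<times> (real^'n \<Rightarrow> real^'m)) set"
    unfolding imm_open_def
  proof (intro conjI ballI)
    show "S \<inter> T \<subseteq> Imm1" using a unfolding imm_open_def by blast
    fix p assume p: "p \<in> S \<inter> T"
    then obtain e1 e2 where e: "e1 > 0" "\<forall>q\<in>Imm1. imm_dist q p < e1 \<longrightarrow> q \<in> S"
      "e2 > 0" "\<forall>q\<in>Imm1. imm_dist q p < e2 \<longrightarrow> q \<in> T"
      using a unfolding imm_open_def by blast
    show "\<exists>e>0. \<forall>q\<in>Imm1. imm_dist q p < e \<longrightarrow> q \<in> S \<inter> T"
    proof (rule exI[of _ "min e1 e2"], rule conjI)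
      show "0 < min e1 e2" using e(1,3) by simp
      show "\<forall>q\<in>Imm1. imm_dist q p < min e1 e2 \<longrightarrow> q \<in> S \<inter> T"
      proof (intro ballI impI)
        fix q assume q: "q \<in> Imm1" "imm_dist q p < min e1 e2"
        have "q \<in> S" using e(2) q by simp
        moreover have "q \<in> T" using e(4) q by simp
        ultimately show "q \<in> S \<inter> T" by blast
      qed
    qed
  qed
  have 2: "imm_open (\<Union>K)" if K: "\<forall>S\<in>K. imm_open S"
    for K :: "((real^'n \<Rightarrow> real^'m) \<times> (real^'n \<Rightarrow> real^'m)) set set"
    unfolding imm_open_def
  proof (intro conjI ballI)
    show "\<Union>K \<subseteq> Imm1" using K unfolding imm_open_def by auto
    fix p assume "p \<in> \<Union>K"
    then obtain S where S: "S \<in> K" "p \<in> S" by blast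
    then obtain e where e: "e > 0" "\<forall>q\<in>Imm1. imm_dist q p < e \<longrightarrow> q \<in> S"
      using K unfolding imm_open_def by blast
    show "\<exists>e>0. \<forall>q\<in>Imm1. imm_dist q p < e \<longrightarrow> q \<in> \<Union>K"
      using e S(1) by blast
  qed
  show ?thesis unfolding istopology_def using 1 2 by blast
qed

definition Imm1_top :: "((real^'n \<Rightarrow> real^'m) \<times> (real^'n \<Rightarrow> real^'m)) topology" where
  "Imm1_top = topology imm_open"

end

theory Submission
  imports Defs
begin


lemma dd_append: "dd g (vs @ [v]) = dd (dd g [v]) vs"
  by (induction vs) auto

lemma smooth_on_dd1:
  assumes "smooth_on U g" shows "smooth_on U (dd g [v])"
  using assms unfolding smooth_on_def by (metis dd_append)

lemma smooth_by_class:
  assumes U: "open U" and g: "g \<in> C"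
    and dif: "\<And>h x. h \<in> C \<Longrightarrow> x \<in> U \<Longrightarrow> h differentiable (at x)"
    and der: "\<And>h v. h \<in> C \<Longrightarrow> \<exists>h'\<in>C. \<forall>x\<in>U. frechet_derivative h (at x) v = h' x"
  shows "smooth_on U g"
proof -
  have main: "\<forall>h\<in>C. \<exists>h'\<in>C. \<forall>x\<in>U. dd h vs x = h' x" for vs
  proof (induction vs)
    case Nil then show ?case by auto
  next
    case (Cons v vs)
    show ?case
    proof
      fix h assume "h \<in> C"
      with Cons obtain h' where h': "h' \<in> C" "\<forall>x\<in>U. dd h vs x = h' x" by blast
      from der[OF h'(1)] obtain h'' where h'': "h'' \<in> C" "\<forall>x\<in>U. frechet_derivative h' (at x) v = h'' x" by blast
      have "dd h (v # vs) x = h'' x" if x: "x \<in> U" for x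
      proof -
        have "(h' has_derivative frechet_derivative h' (at x)) (at x)"
          using dif[OF h'(1) x] frechet_derivative_works by blast
        then have "(dd h vs has_derivative frechet_derivative h' (at x)) (at x)"
          by (rule has_derivative_transform_within_open[OF _ U x]) (use h'(2) in auto)
        then have "frechet_derivative (dd h vs) (at x) = frechet_derivative h' (at x)"
          by (metis frechet_derivative_at)
        then show ?thesis using h''(2) x by simp
      qed
      then show "\<exists>h'\<in>C. \<forall>x\<in>U. dd h (v # vs) x = h' x" using h''(1) by blast
    qed
  qed
  show ?thesis unfolding smooth_on_def
  proof (intro allI ballI)
    fix vs x assume x: "x \<in> U"
    obtain h' where h': "h' \<in> C" "\<forall>x\<in>U. dd g vs x = h' x" using main g by blast
    have "(h' has_derivative frechet_derivative h' (at x)) (at x)"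
      using dif[OF h'(1) x] frechet_derivative_works by blast
    then have "(dd g vs has_derivative frechet_derivative h' (at x)) (at x)"
      by (rule has_derivative_transform_within_open[OF _ U x]) (use h'(2) in auto)
    then show "dd g vs differentiable (at x)" by (rule differentiableI)
  qed
qed



inductive_set SS :: "(real^'n \<Rightarrow> real) set" where
  const: "(\<lambda>y. c) \<in> SS"
| coord: "(\<lambda>y. y $ i) \<in> SS"
| invn: "(\<lambda>y. 1 / norm y) \<in> SS"
| add: "a \<in> SS \<Longrightarrow> b \<in> SS \<Longrightarrow> (\<lambda>y. a y + b y) \<in> SS"
| mult: "a \<in> SS \<Longrightarrow> b \<in> SS \<Longrightarrow> (\<lambda>y. a y * b y) \<in> SS"

lemma SS_sum: "finite A \<Longrightarrow> (\<And>i. i \<in> A \<Longrightarrow> s i \<in> SS) \<Longrightarrow> (\<lambda>y. \<Sum>i\<in>A. s i y) \<in> SS"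
proof (induction A rule: finite_induct)
  case empty then show ?case using SS.const[of 0] by simp
next
  case (insert a A) then show ?case using SS.add[of "s a" "\<lambda>y. \<Sum>i\<in>A. s i y"] by simp
qed

lemma SS_deriv:
  assumes "s \<in> SS"
  shows "\<exists>D. (\<forall>x. x \<noteq> 0 \<longrightarrow> (s has_derivative D x) (at x)) \<and>
             (\<forall>v. \<exists>s'\<in>SS. \<forall>x. x \<noteq> 0 \<longrightarrow> D x v = s' x)"
  using assms
proof (induction rule: SS.induct)
  case (const c)
  show ?case
    by (rule exI[of _ "\<lambda>x v. 0"]) (auto intro: SS.const)
next
  case (coord i)
  show ?case
  proof (rule exI[of _ "\<lambda>x v. v $ i"], intro conjI allI impI)
    fix x :: "real^'a"
    show "((\<lambda>y. y $ i) has_derivative (\<lambda>v. v $ i)) (at x)"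
      by (rule bounded_linear_imp_has_derivative) (rule bounded_linear_vec_nth)
  next
    fix v :: "real^'a" show "\<exists>s'\<in>SS. \<forall>x. x \<noteq> 0 \<longrightarrow> v $ i = s' x"
      by (intro bexI[of _ "\<lambda>y. v $ i"]) (auto intro: SS.const)
  qed
next
  case invn
  show ?case
  proof (rule exI[of _ "\<lambda>x v. - (x \<bullet> v) * ((1 / norm x) * ((1 / norm x) * (1 / norm x)))"], intro conjI allI impI)
    fix x :: "real^'a" assume x: "x \<noteq> 0"
    have n: "(norm has_derivative (\<lambda>h. h \<bullet> sgn x)) (at x)"
      using has_derivative_norm[OF x] by simp
    have "((\<lambda>y. 1 / norm y) has_derivative
        (\<lambda>h. - 1 * (inverse (norm x) * (h \<bullet> sgn x) * inverse (norm x)) + 0 / norm x)) (at x)"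
      by (rule has_derivative_divide[OF has_derivative_const n]) (use x in simp)
    moreover have "(\<lambda>h. - 1 * (inverse (norm x) * (h \<bullet> sgn x) * inverse (norm x)) + 0 / norm x)
       = (\<lambda>v. - (x \<bullet> v) * ((1 / norm x) * ((1 / norm x) * (1 / norm x))))"
      using x by (auto simp: sgn_div_norm inner_commute field_simps power3_eq_cube intro!: ext)
    ultimately show "((\<lambda>y. 1 / norm y) has_derivative
        (\<lambda>v. - (x \<bullet> v) * ((1 / norm x) * ((1 / norm x) * (1 / norm x))))) (at x)" by simp
  next
    fix v :: "real^'a"
    have c1: "(\<lambda>y::real^'a. \<Sum>i\<in>UNIV. v $ i * y $ i) \<in> SS"
      by (rule SS_sum) (auto intro!: SS.mult SS.const SS.coord)
    have c2: "(\<lambda>y::real^'a. 1 / norm y * (1 / norm y * (1 / norm y))) \<in> SS"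
      by (rule SS.mult SS.invn)+
    have mem: "(\<lambda>y::real^'a. -1 * ((\<Sum>i\<in>UNIV. v $ i * y $ i) * (1 / norm y * (1 / norm y * (1 / norm y))))) \<in> SS"
      by (rule SS.mult[OF SS.const SS.mult[OF c1 c2]])
    have iv: "x \<bullet> v = (\<Sum>i\<in>UNIV. v $ i * x $ i)" for x :: "real^'a"
      unfolding inner_vec_def by (simp add: mult.commute)
    show "\<exists>s'\<in>SS. \<forall>x. x \<noteq> 0 \<longrightarrow> - (x \<bullet> v) * ((1 / norm x) * ((1 / norm x) * (1 / norm x))) = s' x"
      by (rule bexI[OF _ mem]) (simp only: iv mult_minus1 mult_minus_left mult_1_left simp_thms)
  qed
next
  case (add a b)
  then obtain Da Db where Da: "\<forall>x. x \<noteq> 0 \<longrightarrow> (a has_derivative Da x) (at x)"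
     "\<forall>v. \<exists>s'\<in>SS. \<forall>x. x \<noteq> 0 \<longrightarrow> Da x v = s' x"
    and Db: "\<forall>x. x \<noteq> 0 \<longrightarrow> (b has_derivative Db x) (at x)"
     "\<forall>v. \<exists>s'\<in>SS. \<forall>x. x \<noteq> 0 \<longrightarrow> Db x v = s' x" by blast
  show ?case
  proof (rule exI[of _ "\<lambda>x v. Da x v + Db x v"], intro conjI allI impI)
    fix x :: "real^'a" assume "x \<noteq> 0"
    then show "((\<lambda>y. a y + b y) has_derivative (\<lambda>v. Da x v + Db x v)) (at x)"
      using Da Db by (auto intro: has_derivative_add)
  next
    fix v
    obtain sa sb where "sa \<in> SS" "sb \<in> SS" "\<forall>x. x \<noteq> 0 \<longrightarrow> Da x v = sa x" "\<forall>x. x \<noteq> 0 \<longrightarrow> Db x v = sb x"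
      using Da(2) Db(2) by meson
    then show "\<exists>s'\<in>SS. \<forall>x. x \<noteq> 0 \<longrightarrow> Da x v + Db x v = s' x"
      by (intro bexI[of _ "\<lambda>y. sa y + sb y"]) (auto intro: SS.add)
  qed
next
  case (mult a b)
  then obtain Da Db where Da: "\<forall>x. x \<noteq> 0 \<longrightarrow> (a has_derivative Da x) (at x)"
     "\<forall>v. \<exists>s'\<in>SS. \<forall>x. x \<noteq> 0 \<longrightarrow> Da x v = s' x"
    and Db: "\<forall>x. x \<noteq> 0 \<longrightarrow> (b has_derivative Db x) (at x)"
     "\<forall>v. \<exists>s'\<in>SS. \<forall>x. x \<noteq> 0 \<longrightarrow> Db x v = s' x" by blast
  show ?case
  proof (rule exI[of _ "\<lambda>x v. a x * Db x v + Da x v * b x"], intro conjI allI impI)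
    fix x :: "real^'a" assume "x \<noteq> 0"
    then show "((\<lambda>y. a y * b y) has_derivative (\<lambda>v. a x * Db x v + Da x v * b x)) (at x)"
      using Da Db by (auto intro: has_derivative_mult)
  next
    fix v
    obtain sa sb where "sa \<in> SS" "sb \<in> SS" "\<forall>x. x \<noteq> 0 \<longrightarrow> Da x v = sa x" "\<forall>x. x \<noteq> 0 \<longrightarrow> Db x v = sb x"
      using Da(2) Db(2) by meson
    then show "\<exists>s'\<in>SS. \<forall>x. x \<noteq> 0 \<longrightarrow> a x * Db x v + Da x v * b x = s' x"
      using mult.hyps
      by (intro bexI[of _ "\<lambda>y. a y * sb y + sa y * b y"]) (auto intro: SS.add SS.mult)
  qed
qed



definition SV :: "(real^'n \<Rightarrow> real^'m) set" where
  "SV = {h. \<exists>s. (\<forall>r. s r \<in> SS) \<and> h = (\<lambda>y. \<Sum>r\<in>UNIV. s r y *\<^sub>R axis r 1)}"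

lemma SV_deriv:
  assumes "h \<in> (SV :: (real^'n \<Rightarrow> real^'m) set)"
  shows "\<exists>D. (\<forall>x. x \<noteq> 0 \<longrightarrow> (h has_derivative D x) (at x)) \<and>
             (\<forall>v. \<exists>h'\<in>SV. \<forall>x. x \<noteq> 0 \<longrightarrow> D x v = h' x)"
proof -
  obtain s where s: "\<forall>r. s r \<in> SS" "h = (\<lambda>y. \<Sum>r\<in>UNIV. s r y *\<^sub>R (axis r 1 :: real^'m))"
    using assms unfolding SV_def by blast
  have "\<forall>r. \<exists>D. (\<forall>x. x \<noteq> 0 \<longrightarrow> (s r has_derivative D x) (at x)) \<and>
             (\<forall>v. \<exists>s'\<in>SS. \<forall>x. x \<noteq> 0 \<longrightarrow> D x v = s' x)"
    using SS_deriv s(1) by blast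
  then obtain D where D: "\<And>r x. x \<noteq> 0 \<Longrightarrow> (s r has_derivative D r x) (at x)"
    "\<And>r v. \<exists>s'\<in>SS. \<forall>x. x \<noteq> 0 \<longrightarrow> D r x v = s' x"
    by metis
  show ?thesis
  proof (rule exI[of _ "\<lambda>x v. \<Sum>r\<in>UNIV. D r x v *\<^sub>R (axis r 1 :: real^'m)"], intro conjI allI impI)
    fix x :: "real^'n" assume x: "x \<noteq> 0"
    show "(h has_derivative (\<lambda>v. \<Sum>r\<in>UNIV. D r x v *\<^sub>R axis r 1)) (at x)"
      unfolding s(2)
      by (intro has_derivative_sum has_derivative_scaleR_left D(1)[OF x])
  next
    fix v :: "real^'n"
    have "\<forall>r. \<exists>s'. s' \<in> SS \<and> (\<forall>x. x \<noteq> 0 \<longrightarrow> D r x v = s' x)" using D(2) by blast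
    then obtain S' where S': "\<And>r. S' r \<in> SS" "\<And>r x. x \<noteq> 0 \<Longrightarrow> D r x v = S' r x" by metis
    show "\<exists>h'\<in>SV. \<forall>x. x \<noteq> 0 \<longrightarrow> (\<Sum>r\<in>UNIV. D r x v *\<^sub>R (axis r 1 :: real^'m)) = h' x"
      by (rule bexI[of _ "\<lambda>y. \<Sum>r\<in>UNIV. S' r y *\<^sub>R axis r 1"]) (use S' in \<open>auto simp: SV_def intro!: exI[of _ S']\<close>)
  qed
qed

lemma smooth_plus_SV:
  fixes g h :: "real^'n \<Rightarrow> real^'m"
  assumes g: "smooth_on (- {0}) g" and h: "h \<in> SV"
  shows "smooth_on (- {0}) (\<lambda>y. g y + h y)"
proof -
  let ?C = "{k. \<exists>g h :: real^'n \<Rightarrow> real^'m. smooth_on (- {0}) g \<and> h \<in> SV \<and> k = (\<lambda>y. g y + h y)}"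
  show ?thesis
  proof (rule smooth_by_class[of "- {0}" _ ?C])
    show "(\<lambda>y. g y + h y) \<in> ?C" using g h by blast
  next
    fix k and x :: "real^'n" assume k: "k \<in> ?C" and x: "x \<in> - {0}"
    then obtain g h where gh: "smooth_on (- {0}) g" "h \<in> SV" "k = (\<lambda>y. g y + h y)" by blast
    have "g differentiable (at x)" using gh(1) x unfolding smooth_on_def
      by (metis dd.simps(1))
    moreover have "h differentiable (at x)" using SV_deriv[OF gh(2)] x
      by (auto intro: differentiableI)
    ultimately show "k differentiable (at x)" unfolding gh(3) by (rule differentiable_add)
  next
    fix k v assume k: "k \<in> ?C"
    then obtain g h where gh: "smooth_on (- {0}) g" "h \<in> SV" "k = (\<lambda>y. g y + h y)" by blast
    obtain D where D: "\<And>x. x \<noteq> 0 \<Longrightarrow> (h has_derivative D x) (at x)"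
         "\<And>v. \<exists>h'\<in>SV. \<forall>x. x \<noteq> 0 \<longrightarrow> D x v = h' x"
      using SV_deriv[OF gh(2)] by blast
    obtain h' where h': "h' \<in> SV" "\<And>x. x \<noteq> 0 \<Longrightarrow> D x v = h' x" using D(2)[of v] by blast
    have sg: "smooth_on (- {0}) (dd g [v])" by (rule smooth_on_dd1[OF gh(1)])
    have fd: "frechet_derivative k (at x) v = dd g [v] x + h' x" if x: "x \<in> - {0}" for x :: "real^'n"
    proof -
      have "g differentiable (at x)" using gh(1) x unfolding smooth_on_def
        by (metis dd.simps(1))
      then have "(g has_derivative frechet_derivative g (at x)) (at x)"
        using frechet_derivative_works by blast
      then have "(k has_derivative (\<lambda>w. frechet_derivative g (at x) w + D x w)) (at x)"
        unfolding gh(3) using D(1) x by (auto intro: has_derivative_add)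
      then have "frechet_derivative k (at x) = (\<lambda>w. frechet_derivative g (at x) w + D x w)"
        by (metis frechet_derivative_at)
      then show ?thesis using h'(2) x by simp
    qed
    show "\<exists>k'\<in>?C. \<forall>x\<in>- {0}. frechet_derivative k (at x) v = k' x"
      by (rule bexI[of _ "\<lambda>y. dd g [v] y + h' y"]) (use sg h'(1) fd in auto)
  qed (simp add: open_Compl)
qed



definition pert :: "real^'n^'m \<Rightarrow> real^'n \<Rightarrow> real^'m" where
  "pert L y = (1 / norm y) *\<^sub>R (L *v y)"

definition hmap :: "(real^'n \<Rightarrow> real^'m) \<Rightarrow> real^'n^'m \<Rightarrow> real \<Rightarrow> real^'n \<Rightarrow> real^'m" where
  "hmap f L t = (\<lambda>x. if x \<in> Sph then f x + t *\<^sub>R (L *v x) else 0)"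

lemma norm_normalize: "y \<noteq> 0 \<Longrightarrow> norm ((1 / norm y) *\<^sub>R y) = 1"
  by simp

lemma radext_hmap:
  fixes f :: "real^'n \<Rightarrow> real^'m"
  assumes "\<forall>x. x \<notin> Sph \<longrightarrow> f x = 0"
  shows "radext (hmap f L t) = (\<lambda>y. radext f y + t *\<^sub>R pert L y)"
proof
  fix y :: "real^'n"
  show "radext (hmap f L t) y = radext f y + t *\<^sub>R pert L y"
  proof (cases "y = 0")
    case True
    then show ?thesis using assms by (simp add: radext_def hmap_def pert_def)
  next
    case False
    then have "(1 / norm y) *\<^sub>R y \<in> Sph" by simp
    then show ?thesis by (simp add: radext_def hmap_def pert_def matrix_vector_mult_scaleR)
  qed
qed

lemma axis_sum_component: "(\<Sum>r\<in>UNIV. c r *\<^sub>R (axis r 1 :: real^'m)) $ j = c j"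
  by (simp add: axis_def sum_component if_distrib cong: if_cong)

lemma pert_SV: "(\<lambda>y. t *\<^sub>R pert L y) \<in> (SV :: (real^'n \<Rightarrow> real^'m) set)"
proof -
  let ?s = "\<lambda>r y. (\<lambda>y. t) y * ((\<lambda>y. 1 / norm y) y * (\<lambda>y. \<Sum>i\<in>UNIV. (\<lambda>i y. L $ r $ i * y $ i) i y) y)"
  have mem: "?s r \<in> SS" for r
  proof -
    have "(\<lambda>y. \<Sum>i\<in>UNIV. L $ r $ i * y $ i) \<in> SS"
      by (rule SS_sum) (simp, rule SS.mult[OF SS.const SS.coord])
    then show ?thesis by (rule SS.mult[OF SS.const SS.mult[OF SS.invn]])
  qed
  have c: "(t *\<^sub>R pert L y) $ j = (\<Sum>r\<in>UNIV. ?s r y *\<^sub>R (axis r 1 :: real^'m)) $ j" for y j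
    unfolding axis_sum_component by (simp add: pert_def matrix_vector_mult_def)
  have eq: "(\<lambda>y. t *\<^sub>R pert L y) = (\<lambda>y. \<Sum>r\<in>UNIV. ?s r y *\<^sub>R (axis r 1 :: real^'m))"
    by (intro ext iffD2[OF vec_eq_iff] allI) (rule c)
  show ?thesis unfolding SV_def
    by (rule CollectI, rule exI[of _ ?s], rule conjI[OF allI[OF mem] eq])
qed

lemma smooth_hmap:
  fixes f :: "real^'n \<Rightarrow> real^'m"
  assumes "\<forall>x. x \<notin> Sph \<longrightarrow> f x = 0" "smooth_on (- {0}) (radext f)"
  shows "smooth_on (- {0}) (radext (hmap f L t))"
  unfolding radext_hmap[OF assms(1)] by (rule smooth_plus_SV[OF assms(2) pert_SV])

lemma pert_deriv:
  assumes x: "(x::real^'n) \<noteq> 0"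
  shows "(pert L has_derivative
     (\<lambda>w. (- 1 * (inverse (norm x) * (w \<bullet> sgn x) * inverse (norm x)) + 0 / norm x) *\<^sub>R (L *v x)
          + (1 / norm x) *\<^sub>R (L *v w))) (at x)"
proof -
  have n: "(norm has_derivative (\<lambda>h. h \<bullet> sgn x)) (at x)"
    using has_derivative_norm[OF x] by simp
  have i: "((\<lambda>y. 1 / norm y) has_derivative
        (\<lambda>h. - 1 * (inverse (norm x) * (h \<bullet> sgn x) * inverse (norm x)) + 0 / norm x)) (at x)"
    by (rule has_derivative_divide[OF has_derivative_const n]) (use x in simp)
  have l: "((\<lambda>y. L *v y) has_derivative (\<lambda>w. L *v w)) (at x)"
    by (rule bounded_linear_imp_has_derivative) simp
  show ?thesis unfolding pert_def[abs_def]
    using has_derivative_scaleR[OF i l] by (simp add: algebra_simps)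
qed

lemma dmap_hmap:
  fixes f :: "real^'n \<Rightarrow> real^'m"
  assumes "\<forall>x. x \<notin> Sph \<longrightarrow> f x = 0" "smooth_on (- {0}) (radext f)"
    and x: "x \<in> Sph" and v: "v \<in> tangent x"
  shows "dmap (hmap f L t) x v = dmap f x v + t *\<^sub>R (L *v v)"
proof -
  have x0: "x \<noteq> 0" using x by auto
  have "radext f differentiable (at x)" using assms(2) x0 unfolding smooth_on_def
    by (metis ComplI dd.simps(1) singletonD)
  then have F: "(radext f has_derivative frechet_derivative (radext f) (at x)) (at x)"
    using frechet_derivative_works by blast
  have "((\<lambda>y. radext f y + t *\<^sub>R pert L y) has_derivative
     (\<lambda>w. frechet_derivative (radext f) (at x) w + t *\<^sub>R
        ((- 1 * (inverse (norm x) * (w \<bullet> sgn x) * inverse (norm x)) + 0 / norm x) *\<^sub>R (L *v x)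
          + (1 / norm x) *\<^sub>R (L *v w)))) (at x)"
    by (rule has_derivative_add[OF F has_derivative_scaleR_right[OF pert_deriv[OF x0]]])
  then have "frechet_derivative (radext (hmap f L t)) (at x) = (\<lambda>w. frechet_derivative (radext f) (at x) w + t *\<^sub>R
        ((- 1 * (inverse (norm x) * (w \<bullet> sgn x) * inverse (norm x)) + 0 / norm x) *\<^sub>R (L *v x)
          + (1 / norm x) *\<^sub>R (L *v w)))"
    unfolding radext_hmap[OF assms(1)] by (rule sym[OF frechet_derivative_at])
  moreover have "v \<bullet> sgn x = 0" using v by (simp add: tangent_def sgn_div_norm inner_commute)
  moreover have "norm x = 1" using x by simp
  ultimately have "dmap (hmap f L t) x v = dmap f x v + t *\<^sub>R
        ((- 1 * (inverse 1 * 0 * inverse 1) + 0 / 1) *\<^sub>R (L *v x) + (1 / 1) *\<^sub>R (L *v v))"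
    unfolding dmap_def by (simp only:)
  then show ?thesis by simp
qed



lemma Imm1_iff:
  "((l, \<nu>) \<in> Imm1) \<longleftrightarrow>
      (\<forall>x. x \<notin> Sph \<longrightarrow> l x = 0 \<and> \<nu> x = 0)
    \<and> smooth_on (- {0}) (radext l)
    \<and> (\<forall>x\<in>Sph. \<forall>v\<in>tangent x. v \<noteq> 0 \<longrightarrow> dmap l x v \<noteq> 0)
    \<and> continuous_on Sph \<nu>
    \<and> (\<forall>x\<in>Sph. \<nu> x \<notin> dmap l x ` tangent x)"
  unfolding Imm1_def by simp

lemma dmap_linear:
  fixes f :: "real^'n \<Rightarrow> real^'m"
  assumes "smooth_on (- {0}) (radext f)" "x \<noteq> 0"
  shows "linear (dmap f x)"
proof -
  have "radext f differentiable (at x)" using assms unfolding smooth_on_def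
    by (metis ComplI dd.simps(1) singletonD)
  then have "(radext f has_derivative frechet_derivative (radext f) (at x)) (at x)"
    using frechet_derivative_works by blast
  then have "bounded_linear (frechet_derivative (radext f) (at x))"
    by (rule has_derivative_bounded_linear)
  then show ?thesis unfolding dmap_def[abs_def] by (simp add: bounded_linear.linear)
qed

lemma dmap_expand:
  fixes f :: "real^'n \<Rightarrow> real^'m"
  assumes "smooth_on (- {0}) (radext f)" "x \<noteq> 0"
  shows "dmap f x v = (\<Sum>i\<in>UNIV. v $ i *\<^sub>R dmap f x (axis i 1))"
proof -
  have l: "linear (dmap f x)" by (rule dmap_linear[OF assms])
  have "v = (\<Sum>i\<in>UNIV. v $ i *\<^sub>R axis i 1)"
    using basis_expansion[of v] by (simp add: scalar_mult_eq_scaleR)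
  then have "dmap f x v = dmap f x (\<Sum>i\<in>UNIV. v $ i *\<^sub>R axis i 1)" by simp
  also have "\<dots> = (\<Sum>i\<in>UNIV. v $ i *\<^sub>R dmap f x (axis i 1))"
    by (simp add: linear_sum[OF l] linear_scale[OF l])
  finally show ?thesis .
qed

lemma dmap_cont:
  fixes f :: "real^'n \<Rightarrow> real^'m"
  assumes sm: "smooth_on (- {0}) (radext f)"
  shows "continuous_on (Sph \<times> UNIV) (\<lambda>p. dmap f (fst p) (snd p))"
proof -
  have ci: "continuous_on Sph (\<lambda>x. dmap f x w)" for w
  proof (rule continuous_at_imp_continuous_on, rule ballI)
    fix x :: "real^'n" assume "x \<in> Sph"
    then have "x \<in> - {0}" by auto
    then have "dd (radext f) [w] differentiable (at x)" using sm unfolding smooth_on_def by blast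
    then have "isCont (dd (radext f) [w]) x" by (rule differentiable_imp_continuous_within)
    then show "isCont (\<lambda>x. dmap f x w) x" by (simp add: dmap_def)
  qed
  have eq: "\<forall>p\<in>Sph \<times> UNIV. dmap f (fst p) (snd p) = (\<Sum>i\<in>UNIV. snd p $ i *\<^sub>R dmap f (fst p) (axis i 1))"
  proof
    fix p :: "(real^'n) \<times> (real^'n)" assume "p \<in> Sph \<times> UNIV"
    then have "fst p \<noteq> 0" by auto
    then show "dmap f (fst p) (snd p) = (\<Sum>i\<in>UNIV. snd p $ i *\<^sub>R dmap f (fst p) (axis i 1))"
      by (rule dmap_expand[OF sm])
  qed
  have "continuous_on (Sph \<times> UNIV) (\<lambda>p. \<Sum>i\<in>UNIV. snd p $ i *\<^sub>R dmap f (fst p) (axis i 1))"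
  proof (intro continuous_on_sum continuous_on_scaleR)
    fix i :: 'n
    show "continuous_on (Sph \<times> UNIV) (\<lambda>p. snd p $ i)"
      by (intro continuous_intros)
    show "continuous_on (Sph \<times> UNIV) (\<lambda>p. dmap f (fst p) (axis i 1))"
      by (rule continuous_on_compose2[OF ci continuous_on_fst]) auto
  qed
  then show ?thesis by (rule continuous_on_eq) (rule eq[rule_format, symmetric])
qed



lemma two_elems: "CARD('n::finite) \<ge> 2 \<Longrightarrow> \<exists>a b :: 'n. a \<noteq> b"
  using card_le_Suc0_iff_eq[of "UNIV :: 'n set"] by force

lemma closed_tangent_pairs: "closed {p :: (real^'n) \<times> (real^'n). snd p \<bullet> fst p = 0}"
  by (rule closed_Collect_eq) (intro continuous_intros)+

lemma imm_stable:
  fixes f \<nu> :: "real^'n \<Rightarrow> real^'m"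
  assumes n2: "CARD('n) \<ge> 2" and fv: "(f, \<nu>) \<in> Imm1"
  shows "\<exists>lam>0. \<forall>L t. (\<forall>w. norm (L *v w) \<le> lam * norm w) \<longrightarrow> t \<in> {0..1} \<longrightarrow> (hmap f L t, \<nu>) \<in> Imm1"
proof -
  have Z: "\<forall>x. x \<notin> Sph \<longrightarrow> f x = 0 \<and> \<nu> x = 0" and sm: "smooth_on (- {0}) (radext f)"
    and imm: "\<forall>x\<in>Sph. \<forall>v\<in>tangent x. v \<noteq> 0 \<longrightarrow> dmap f x v \<noteq> 0"
    and cnu: "continuous_on Sph \<nu>" and tr: "\<forall>x\<in>Sph. \<nu> x \<notin> dmap f x ` tangent x"
    using fv unfolding Imm1_iff by auto
  have Zf: "\<forall>x. x \<notin> Sph \<longrightarrow> f x = 0" using Z by auto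
  obtain a b :: 'n where ab: "a \<noteq> b" using two_elems[OF n2] by blast
  have lin: "linear (dmap f x)" if "x \<in> Sph" for x
    by (rule dmap_linear[OF sm]) (use that in auto)
  have dc: "continuous_on (Sph \<times> UNIV) (\<lambda>p. dmap f (fst p) (snd p))" by (rule dmap_cont[OF sm])
  define K where "K = (Sph \<times> Sph) \<inter> {p :: (real^'n) \<times> (real^'n). snd p \<bullet> fst p = 0}"
  have cK: "compact K" unfolding K_def
    by (intro compact_Int_closed compact_Times compact_sphere closed_tangent_pairs)
  have neK: "K \<noteq> {}"
  proof -
    have "(axis a 1, axis b 1) \<in> K" unfolding K_def using ab by (simp add: inner_axis_axis)
    then show ?thesis by blast
  qed
  have contK: "continuous_on K (\<lambda>p. norm (dmap f (fst p) (snd p)))"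
    by (rule continuous_on_norm, rule continuous_on_subset[OF dc]) (auto simp: K_def)
  obtain p0 where p0: "p0 \<in> K" "\<forall>p\<in>K. norm (dmap f (fst p0) (snd p0)) \<le> norm (dmap f (fst p) (snd p))"
    using continuous_attains_inf[OF cK neK contK] by blast
  define c where "c = norm (dmap f (fst p0) (snd p0))"
  have c0: "c > 0"
  proof -
    have "fst p0 \<in> Sph" "snd p0 \<in> tangent (fst p0)" "snd p0 \<noteq> 0"
      using p0(1) by (auto simp: K_def tangent_def)
    then show ?thesis using imm c_def by auto
  qed
  have lowb: "c * norm v \<le> norm (dmap f x v)" if x: "x \<in> Sph" and v: "v \<in> tangent x" for x v
  proof (cases "v = 0")
    case True then show ?thesis by simp
  next
    case False
    let ?u = "(1 / norm v) *\<^sub>R v"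
    have "(x, ?u) \<in> K" using x v False by (auto simp: K_def tangent_def)
    then have "c \<le> norm (dmap f x ?u)" using p0(2) c_def by force
    also have "dmap f x ?u = (1 / norm v) *\<^sub>R dmap f x v" using lin[OF x] by (simp add: linear_scale)
    finally have "c \<le> norm (dmap f x v) / norm v" using False by simp
    then show ?thesis using False by (simp add: field_simps)
  qed
  have "bounded (\<nu> ` Sph)" by (intro compact_imp_bounded compact_continuous_image cnu compact_sphere)
  then obtain B where B: "B > 0" "\<forall>y\<in>\<nu> ` Sph. norm y \<le> B" unfolding bounded_pos by blast
  define R where "R = 2 * B / c"
  have R0: "R > 0" unfolding R_def using B c0 by simp
  define K2 where "K2 = (Sph \<times> cball 0 R) \<inter> {p :: (real^'n) \<times> (real^'n). snd p \<bullet> fst p = 0}"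
  have cK2: "compact K2" unfolding K2_def
    by (intro compact_Int_closed compact_Times compact_sphere compact_cball closed_tangent_pairs)
  have neK2: "K2 \<noteq> {}"
  proof -
    have "(axis a 1, 0) \<in> K2" unfolding K2_def using R0 by simp
    then show ?thesis by blast
  qed
  have contK2: "continuous_on K2 (\<lambda>p. norm (\<nu> (fst p) - dmap f (fst p) (snd p)))"
  proof (intro continuous_on_norm continuous_on_diff)
    show "continuous_on K2 (\<lambda>p. \<nu> (fst p))"
      by (rule continuous_on_compose2[OF cnu continuous_on_fst]) (auto simp: K2_def)
    show "continuous_on K2 (\<lambda>p. dmap f (fst p) (snd p))"
      by (rule continuous_on_subset[OF dc]) (auto simp: K2_def)
  qed
  obtain p1 where p1: "p1 \<in> K2" "\<forall>p\<in>K2. norm (\<nu> (fst p1) - dmap f (fst p1) (snd p1)) \<le> norm (\<nu> (fst p) - dmap f (fst p) (snd p))"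
    using continuous_attains_inf[OF cK2 neK2 contK2] by blast
  define c2 where "c2 = norm (\<nu> (fst p1) - dmap f (fst p1) (snd p1))"
  have c20: "c2 > 0"
  proof -
    have "fst p1 \<in> Sph" "snd p1 \<in> tangent (fst p1)"
      using p1(1) by (auto simp: K2_def tangent_def)
    then have "\<nu> (fst p1) \<noteq> dmap f (fst p1) (snd p1)" using tr by force
    then show ?thesis unfolding c2_def by simp
  qed
  have marg: "c2 \<le> norm (\<nu> x - dmap f x v)" if "x \<in> Sph" "v \<in> tangent x" "norm v \<le> R" for x v
  proof -
    have "(x, v) \<in> K2" using that by (auto simp: K2_def tangent_def)
    then show ?thesis using p1(2) c2_def by force
  qed
  define lam where "lam = min (c / 2) (c2 / (R + 1))"
  have lam0: "lam > 0" unfolding lam_def using c0 c20 R0 by simp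
  show ?thesis
  proof (rule exI[of _ lam], intro conjI allI impI)
    show "lam > 0" by (rule lam0)
    fix L :: "real^'n^'m" and t :: real
    assume HL: "\<forall>w. norm (L *v w) \<le> lam * norm w" and t: "t \<in> {0..1}"
    have tL: "norm (t *\<^sub>R (L *v w)) \<le> lam * norm w" for w
    proof -
      have "norm (t *\<^sub>R (L *v w)) = \<bar>t\<bar> * norm (L *v w)" by simp
      also have "\<dots> \<le> 1 * norm (L *v w)" using t by (intro mult_right_mono) auto
      also have "\<dots> \<le> lam * norm w" using HL by simp
      finally show ?thesis .
    qed
    have lamc: "lam \<le> c / 2" and lamc2: "lam \<le> c2 / (R + 1)" unfolding lam_def by (rule min.cobounded1, rule min.cobounded2)
    have dh: "dmap (hmap f L t) x v = dmap f x v + t *\<^sub>R (L *v v)" if "x \<in> Sph" "v \<in> tangent x" for x v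
      by (rule dmap_hmap[OF Zf sm that])
    show "(hmap f L t, \<nu>) \<in> Imm1" unfolding Imm1_iff
    proof (intro conjI ballI allI impI)
      fix x :: "real^'n" assume "x \<notin> Sph"
      then show "hmap f L t x = 0" "\<nu> x = 0" using Z by (auto simp: hmap_def)
    next
      show "smooth_on (- {0}) (radext (hmap f L t))" by (rule smooth_hmap[OF Zf sm])
    next
      show "continuous_on Sph \<nu>" by (rule cnu)
    next
      fix x v :: "real^'n" assume x: "x \<in> Sph" and v: "v \<in> tangent x" and v0: "v \<noteq> 0"
      have "c * norm v \<le> norm (dmap f x v)" by (rule lowb[OF x v])
      moreover have "norm (t *\<^sub>R (L *v v)) \<le> c / 2 * norm v"
        using tL[of v] lamc by (meson mult_right_mono norm_ge_zero order_trans)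
      moreover have "norm (dmap f x v) - norm (t *\<^sub>R (L *v v)) \<le> norm (dmap f x v + t *\<^sub>R (L *v v))"
        by (metis norm_diff_ineq norm_minus_cancel diff_minus_eq_add)
      moreover have "0 < c / 2 * norm v" using c0 v0 by simp
      ultimately have "norm (dmap f x v + t *\<^sub>R (L *v v)) > 0" by linarith
      then show "dmap (hmap f L t) x v \<noteq> 0" using dh[OF x v] by auto
    next
      fix x :: "real^'n" assume x: "x \<in> Sph"
      show "\<nu> x \<notin> dmap (hmap f L t) x ` tangent x"
      proof
        assume "\<nu> x \<in> dmap (hmap f L t) x ` tangent x"
        then obtain v where v: "v \<in> tangent x" and e: "\<nu> x = dmap f x v + t *\<^sub>R (L *v v)"
          using dh[OF x] by auto
        have nb: "norm (\<nu> x) \<le> B" using B x by auto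
        have tb: "norm (t *\<^sub>R (L *v v)) \<le> c / 2 * norm v"
          using tL[of v] lamc by (meson mult_right_mono norm_ge_zero order_trans)
        have "c * norm v \<le> norm (dmap f x v)" by (rule lowb[OF x v])
        also have "dmap f x v = \<nu> x - t *\<^sub>R (L *v v)" using e by simp
        also have "norm (\<nu> x - t *\<^sub>R (L *v v)) \<le> norm (\<nu> x) + norm (t *\<^sub>R (L *v v))"
          by (rule norm_triangle_ineq4)
        finally have "c * norm v \<le> B + c / 2 * norm v" using nb tb by linarith
        then have "c / 2 * norm v \<le> B" by simp
        then have vR: "norm v \<le> R" unfolding R_def using c0 by (simp add: field_simps)
        have "c2 \<le> norm (\<nu> x - dmap f x v)" by (rule marg[OF x v vR])
        also have "\<nu> x - dmap f x v = t *\<^sub>R (L *v v)" using e by simp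
        also have "norm (t *\<^sub>R (L *v v)) \<le> lam * norm v" by (rule tL)
        also have "\<dots> \<le> c2 / (R + 1) * R" using lamc2 vR lam0 by (meson less_imp_le mult_mono norm_ge_zero order_trans)
        also have "\<dots> < c2" using c20 R0 by (simp add: field_simps)
        finally show False by simp
      qed
    qed
  qed
qed



lemma ab_exists:
  fixes k1 k2 :: "'n::finite"
  assumes m: "CARD('m::finite) = 2 * CARD('n) - 1"
  shows "\<exists>\<alpha> \<beta> :: 'n \<Rightarrow> 'm. inj \<alpha> \<and> inj \<beta> \<and> \<alpha> k1 = \<beta> k2 \<and> (\<forall>i i'. \<alpha> i = \<beta> i' \<longrightarrow> i = k1 \<and> i' = k2)"
proof -
  define T :: "('n + 'n) set" where "T = range Inl \<union> Inr ` (UNIV - {k2})"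
  have "card T = CARD('n) + (CARD('n) - 1)"
    unfolding T_def by (subst card_Un_disjoint) (auto simp: card_image)
  also have "\<dots> = CARD('m)" using m by (simp add: Suc_le_eq)
  finally have "\<exists>g. bij_betw g T (UNIV :: 'm set)"
    by (intro finite_same_card_bij) (auto simp: T_def)
  then obtain g where g: "bij_betw g T (UNIV :: 'm set)" by blast
  then have gi: "inj_on g T" by (simp add: bij_betw_def)
  define \<alpha> where "\<alpha> i = g (Inl i)" for i
  define \<beta> where "\<beta> i = (if i = k2 then g (Inl k1) else g (Inr i))" for i
  have ginj: "g a = g b \<Longrightarrow> a \<in> T \<Longrightarrow> b \<in> T \<Longrightarrow> a = b" for a b using gi by (meson inj_onD)
  have "inj \<alpha>" unfolding \<alpha>_def inj_def using ginj by (auto simp: T_def)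
  moreover have "inj \<beta>"
  proof (rule injI)
    fix i i' assume e: "\<beta> i = \<beta> i'"
    have T1: "Inl a \<in> T" for a by (simp add: T_def)
    have T2: "a \<noteq> k2 \<Longrightarrow> Inr a \<in> T" for a by (simp add: T_def)
    show "i = i'"
    proof (cases "i = k2"; cases "i' = k2")
      assume "i = k2" "i' \<noteq> k2"
      then have "g (Inl k1) = g (Inr i')" using e by (simp add: \<beta>_def)
      then have "Inl k1 = Inr i'" using ginj T1 T2 \<open>i' \<noteq> k2\<close> by blast
      then show ?thesis by simp
    next
      assume "i \<noteq> k2" "i' = k2"
      then have "g (Inr i) = g (Inl k1)" using e by (simp add: \<beta>_def)
      then have "Inr i = Inl k1" using ginj T1 T2 \<open>i \<noteq> k2\<close> by blast
      then show ?thesis by simp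
    next
      assume "i \<noteq> k2" "i' \<noteq> k2"
      then have "g (Inr i) = g (Inr i')" using e by (simp add: \<beta>_def)
      then have "Inr i = (Inr i' :: 'n + 'n)" using ginj T2 \<open>i \<noteq> k2\<close> \<open>i' \<noteq> k2\<close> by blast
      then show ?thesis by simp
    qed simp
  qed
  moreover have "\<alpha> k1 = \<beta> k2" by (simp add: \<alpha>_def \<beta>_def)
  moreover have "\<forall>i i'. \<alpha> i = \<beta> i' \<longrightarrow> i = k1 \<and> i' = k2"
  proof (intro allI impI)
    fix i i' assume e: "\<alpha> i = \<beta> i'"
    have T1: "Inl a \<in> T" for a by (simp add: T_def)
    have T2: "a \<noteq> k2 \<Longrightarrow> Inr a \<in> T" for a by (simp add: T_def)
    show "i = k1 \<and> i' = k2"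
    proof (cases "i' = k2")
      case True
      then have "g (Inl i) = g (Inl k1)" using e by (simp add: \<alpha>_def \<beta>_def)
      then have "Inl i = (Inl k1 :: 'n + 'n)" using ginj T1 by blast
      then show ?thesis using True by simp
    next
      case False
      then have "g (Inl i) = g (Inr i')" using e by (simp add: \<alpha>_def \<beta>_def)
      then have "Inl i = Inr i'" using ginj T1 T2 False by blast
      then show ?thesis by simp
    qed
  qed
  ultimately show ?thesis by blast
qed

lemma vec_lambda_as_sum: "(\<chi> i. g i) = (\<Sum>i\<in>UNIV. g i *\<^sub>R (axis i 1 :: real^'n))"
  unfolding vec_eq_iff axis_sum_component by simp

lemma differentiable_vec_lambda:
  assumes "\<And>i. (\<lambda>x. g x i :: real) differentiable (at x0)"
  shows "(\<lambda>x. (\<chi> i. g x i) :: real^'n) differentiable (at x0)"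
proof -
  have "(\<lambda>x. \<Sum>i\<in>UNIV. g x i *\<^sub>R (axis i 1 :: real^'n)) differentiable (at x0)"
    using assms by (intro differentiable_sum) auto
  then show ?thesis by (simp only: vec_lambda_as_sum)
qed

lemma vsum: "(\<Sum>r\<in>UNIV. axis r (v r)) = ((\<chi> r. v r) :: 'a::real_normed_vector^'m)"
  unfolding vec_eq_iff by (simp add: axis_def sum_component cong: if_cong)

lemma mat_as_sum: "(\<chi> r. \<chi> i. g r i) = (\<Sum>r\<in>UNIV. \<Sum>i\<in>UNIV. g r i *\<^sub>R (axis r (axis i 1) :: real^'n^'m))"
proof -
  have "(\<Sum>r\<in>UNIV. \<Sum>i\<in>UNIV. g r i *\<^sub>R (axis r (axis i 1) :: real^'n^'m)) = (\<Sum>r\<in>UNIV. axis r (\<Sum>i\<in>UNIV. g r i *\<^sub>R (axis i 1 :: real^'n)))"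
  proof (rule sum.cong[OF refl])
    fix r show "(\<Sum>i\<in>UNIV. g r i *\<^sub>R (axis r (axis i 1) :: real^'n^'m)) = axis r (\<Sum>i\<in>UNIV. g r i *\<^sub>R (axis i 1 :: real^'n))"
      unfolding vec_eq_iff by (simp add: axis_def sum_component cong: if_cong)
  qed
  also have "\<dots> = (\<chi> r. (\<Sum>i\<in>UNIV. g r i *\<^sub>R (axis i 1 :: real^'n)))" by (rule vsum)
  also have "\<dots> = (\<chi> r. \<chi> i. g r i)" by (simp add: vec_lambda_as_sum)
  finally show ?thesis by simp
qed

lemma differentiable_mat_lambda:
  assumes "\<And>r i. (\<lambda>x. g x r i :: real) differentiable (at x0)"
  shows "(\<lambda>x. (\<chi> r. \<chi> i. g x r i) :: real^'n^'m) differentiable (at x0)"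
proof -
  have "(\<lambda>x. \<Sum>r\<in>UNIV. \<Sum>i\<in>UNIV. g x r i *\<^sub>R (axis r (axis i 1) :: real^'n^'m)) differentiable (at x0)"
    using assms by (intro differentiable_sum ballI differentiable_scaleR differentiable_const) auto
  then show ?thesis by (simp only: mat_as_sum)
qed

lemma differentiable_entry: "(\<lambda>M :: real^'n^'m. M $ r $ i) differentiable (at M0)"
proof -
  have "bounded_linear (\<lambda>M :: real^'n^'m. M $ r $ i)"
    by (rule bounded_linear_compose[OF bounded_linear_vec_nth bounded_linear_vec_nth])
  then show ?thesis by (rule bounded_linear_imp_differentiable)
qed

definition nrm :: "real^'n \<Rightarrow> real^'n" where "nrm z = (1 / norm z) *\<^sub>R z"

lemma differentiable_nrm:
  assumes z: "z \<noteq> 0" shows "nrm differentiable (at z)"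
proof -
  have n: "(\<lambda>x. norm x) differentiable (at z)" using differentiable_norm_at[OF z] by simp
  have "(\<lambda>x. 1 / norm x) differentiable (at z)"
    by (rule differentiable_divide[OF differentiable_const n]) (use z in simp)
  then show ?thesis unfolding nrm_def[abs_def] by (rule differentiable_scaleR[OF _ differentiable_ident])
qed

definition zz :: "('n \<Rightarrow> 'm) \<Rightarrow> 'n \<Rightarrow> real \<Rightarrow> 'n \<Rightarrow> real^'n^'m \<Rightarrow> real^'n" where
  "zz \<alpha> k s j M = (\<chi> i. if i = k then s else M $ \<alpha> i $ j)"

lemma zz_nonzero: "s \<noteq> 0 \<Longrightarrow> zz \<alpha> k s j M \<noteq> 0"
proof
  assume s: "s \<noteq> 0" and z: "zz \<alpha> k s j M = 0"
  have "zz \<alpha> k s j M $ k = s" by (simp add: zz_def)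
  then show False using s z by simp
qed

lemma differentiable_zz: "zz \<alpha> k s j differentiable (at M0)"
  unfolding zz_def[abs_def]
proof (rule differentiable_vec_lambda)
  fix i show "(\<lambda>M. if i = k then s else M $ \<alpha> i $ j) differentiable (at M0)"
    by (cases "i = k") (simp_all add: differentiable_entry)
qed

definition XX where "XX \<alpha> k s j M = nrm (zz \<alpha> k s j M)"

lemma differentiable_XX: "s \<noteq> 0 \<Longrightarrow> XX \<alpha> k s j differentiable (at M0)"
proof -
  assume s: "s \<noteq> 0"
  have "(nrm \<circ> zz \<alpha> k s j) differentiable (at M0)"
    by (rule differentiable_chain_at[OF differentiable_zz differentiable_nrm[OF zz_nonzero[OF s]]])
  then show ?thesis unfolding XX_def[abs_def] comp_def .
qed

lemma norm_XX: "s \<noteq> 0 \<Longrightarrow> norm (XX \<alpha> k s j M) = 1"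
  unfolding XX_def nrm_def using zz_nonzero[of s] by simp

definition Phi where
  "Phi F \<alpha> \<beta> j k1 s1 k2 s2 M =
     (\<chi> r. \<chi> i. if i = j then
        ((F (XX \<beta> k2 s2 j M) - F (XX \<alpha> k1 s1 j M)) $ r
           - (\<Sum>i'\<in>UNIV - {j}. (XX \<alpha> k1 s1 j M - XX \<beta> k2 s2 j M) $ i' * M $ r $ i'))
         / (XX \<alpha> k1 s1 j M - XX \<beta> k2 s2 j M) $ j
      else M $ r $ i)"

lemma differentiable_Phi:
  fixes F :: "real^'n \<Rightarrow> real^'m"
  assumes F: "\<And>y. y \<noteq> 0 \<Longrightarrow> F differentiable (at y)"
    and s: "s1 \<noteq> 0" "s2 \<noteq> 0" and u: "(XX \<alpha> k1 s1 j M0 - XX \<beta> k2 s2 j M0) $ j \<noteq> 0"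
  shows "Phi F \<alpha> \<beta> j k1 s1 k2 s2 differentiable (at M0)"
proof -
  have X1: "XX \<alpha> k1 s1 j differentiable (at M0)" by (rule differentiable_XX[OF s(1)])
  have X2: "XX \<beta> k2 s2 j differentiable (at M0)" by (rule differentiable_XX[OF s(2)])
  have FX1: "(\<lambda>M. F (XX \<alpha> k1 s1 j M)) differentiable (at M0)"
  proof -
    have "XX \<alpha> k1 s1 j M0 \<noteq> 0" using norm_XX[OF s(1), of \<alpha> k1 j M0] by auto
    from differentiable_chain_at[OF X1 F[OF this]] show ?thesis by (simp add: comp_def)
  qed
  have FX2: "(\<lambda>M. F (XX \<beta> k2 s2 j M)) differentiable (at M0)"
  proof -
    have "XX \<beta> k2 s2 j M0 \<noteq> 0" using norm_XX[OF s(2), of \<beta> k2 j M0] by auto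
    from differentiable_chain_at[OF X2 F[OF this]] show ?thesis by (simp add: comp_def)
  qed
  have comp: "(\<lambda>M. G M $ r) differentiable (at M0)" if "G differentiable (at M0)" for G :: "real^'n^'m \<Rightarrow> real^'k" and r
  proof -
    have "bounded_linear (\<lambda>v :: real^'k. v $ r)" by (rule bounded_linear_vec_nth)
    then have "(\<lambda>v :: real^'k. v $ r) differentiable (at (G M0))" by (rule bounded_linear_imp_differentiable)
    from differentiable_chain_at[OF that this] show ?thesis by (simp add: comp_def)
  qed
  have D: "(\<lambda>M. (XX \<alpha> k1 s1 j M - XX \<beta> k2 s2 j M) $ i) differentiable (at M0)" for i
    by (rule comp) (intro differentiable_diff X1 X2)
  have W: "(\<lambda>M. (F (XX \<beta> k2 s2 j M) - F (XX \<alpha> k1 s1 j M)) $ r) differentiable (at M0)" for r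
    by (rule comp) (intro differentiable_diff FX1 FX2)
  show ?thesis unfolding Phi_def[abs_def]
  proof (rule differentiable_mat_lambda)
    fix r i
    show "(\<lambda>M. if i = j then
        ((F (XX \<beta> k2 s2 j M) - F (XX \<alpha> k1 s1 j M)) $ r
           - (\<Sum>i'\<in>UNIV - {j}. (XX \<alpha> k1 s1 j M - XX \<beta> k2 s2 j M) $ i' * M $ r $ i'))
         / (XX \<alpha> k1 s1 j M - XX \<beta> k2 s2 j M) $ j
      else M $ r $ i) differentiable (at M0)"
    proof (cases "i = j")
      case True
      have S: "(\<lambda>M. \<Sum>i'\<in>UNIV - {j}. (XX \<alpha> k1 s1 j M - XX \<beta> k2 s2 j M) $ i' * M $ r $ i') differentiable (at M0)"
        by (rule differentiable_sum[where f="\<lambda>i' M. (XX \<alpha> k1 s1 j M - XX \<beta> k2 s2 j M) $ i' * M $ r $ i'"])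
          (simp, use differentiable_mult[OF D differentiable_entry] in blast)
      have "(\<lambda>M. ((F (XX \<beta> k2 s2 j M) - F (XX \<alpha> k1 s1 j M)) $ r
           - (\<Sum>i'\<in>UNIV - {j}. (XX \<alpha> k1 s1 j M - XX \<beta> k2 s2 j M) $ i' * M $ r $ i'))
         / (XX \<alpha> k1 s1 j M - XX \<beta> k2 s2 j M) $ j) differentiable (at M0)"
        by (rule differentiable_divide[OF differentiable_diff[OF W S] D u])
      then show ?thesis by (subst if_P[OF True])
    next
      case False
      then show ?thesis by (simp add: differentiable_entry)
    qed
  qed
qed



definition Bad :: "(real^'n \<Rightarrow> real^'m) \<Rightarrow> (real^'n^'m) set" where
  "Bad f = {L. \<exists>x\<in>Sph. \<exists>y\<in>Sph. x \<noteq> y \<and> f x + L *v x = f y + L *v y}"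

lemma radext_on_Sph: "x \<in> Sph \<Longrightarrow> radext f x = f x"
  by (simp add: radext_def)

lemma cover_point:
  fixes f :: "real^'n \<Rightarrow> real^'m" and \<alpha> \<beta> :: "'n \<Rightarrow> 'm"
  assumes ab: "inj \<alpha>" "inj \<beta>" "\<alpha> k1 = \<beta> k2" "\<forall>i i'. \<alpha> i = \<beta> i' \<longrightarrow> i = k1 \<and> i' = k2"
    and x: "x \<in> Sph" and y: "y \<in> Sph" and j: "(x - y) $ j \<noteq> 0"
    and k1: "x $ k1 \<noteq> 0" and k2: "y $ k2 \<noteq> 0"
    and eq: "f x + L *v x = f y + L *v y"
  shows "\<exists>M. (XX \<alpha> k1 (sgn (x $ k1)) j M - XX \<beta> k2 (sgn (y $ k2)) j M) $ j \<noteq> 0 \<and> M $ \<alpha> k1 $ j = 0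
     \<and> Phi (radext f) \<alpha> \<beta> j k1 (sgn (x $ k1)) k2 (sgn (y $ k2)) M = L"
proof -
  define z1 where "z1 = (1 / \<bar>x $ k1\<bar>) *\<^sub>R x"
  define z2 where "z2 = (1 / \<bar>y $ k2\<bar>) *\<^sub>R y"
  define c where "c r = (if r \<in> range \<alpha> \<and> r \<noteq> \<alpha> k1 then z1 $ (inv \<alpha> r)
      else if r \<in> range \<beta> \<and> r \<noteq> \<beta> k2 then z2 $ (inv \<beta> r) else 0)" for r
  define M :: "real^'n^'m" where "M = (\<chi> r. \<chi> i. if i = j then c r else L $ r $ i)"
  have Mj: "M $ r $ j = c r" for r by (simp add: M_def)
  have Mi: "i \<noteq> j \<Longrightarrow> M $ r $ i = L $ r $ i" for r i by (simp add: M_def)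
  have cz1: "c (\<alpha> i) = z1 $ i" if "i \<noteq> k1" for i
  proof -
    have "\<alpha> i \<noteq> \<alpha> k1" using that ab(1) by (meson injD)
    then show ?thesis by (simp add: c_def inv_f_f[OF ab(1)])
  qed
  have cz2: "c (\<beta> i) = z2 $ i" if "i \<noteq> k2" for i
  proof -
    have "\<beta> i \<notin> range \<alpha>" using that ab(4) by auto
    moreover have "\<beta> i \<noteq> \<beta> k2" using that ab(2) by (meson injD)
    ultimately show ?thesis by (simp add: c_def inv_f_f[OF ab(2)])
  qed
  have c0: "c (\<alpha> k1) = 0" by (simp add: c_def ab(3))
  have sg: "sgn a = (1 / \<bar>a\<bar>) * a" if "a \<noteq> (0::real)" for a
    using that by (simp add: sgn_if)
  have zz1: "zz \<alpha> k1 (sgn (x $ k1)) j M = z1"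
    unfolding vec_eq_iff
  proof
    fix i show "zz \<alpha> k1 (sgn (x $ k1)) j M $ i = z1 $ i"
      by (cases "i = k1") (simp_all add: zz_def Mj cz1 z1_def sg[OF k1])
  qed
  have zz2: "zz \<beta> k2 (sgn (y $ k2)) j M = z2"
    unfolding vec_eq_iff
  proof
    fix i show "zz \<beta> k2 (sgn (y $ k2)) j M $ i = z2 $ i"
      by (cases "i = k2") (simp_all add: zz_def Mj cz2 z2_def sg[OF k2])
  qed
  have nz: "nrm ((1 / \<bar>a\<bar>) *\<^sub>R z) = z" if "norm z = 1" "a \<noteq> 0" for a :: real and z :: "real^'n"
    using that by (simp add: nrm_def)
  have X1: "XX \<alpha> k1 (sgn (x $ k1)) j M = x"
    unfolding XX_def zz1 z1_def using x k1 by (intro nz) auto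
  have X2: "XX \<beta> k2 (sgn (y $ k2)) j M = y"
    unfolding XX_def zz2 z2_def using y k2 by (intro nz) auto
  have PL: "Phi (radext f) \<alpha> \<beta> j k1 (sgn (x $ k1)) k2 (sgn (y $ k2)) M = L"
    unfolding vec_eq_iff
  proof (intro allI)
    fix r i
    show "Phi (radext f) \<alpha> \<beta> j k1 (sgn (x $ k1)) k2 (sgn (y $ k2)) M $ r $ i = L $ r $ i"
    proof (cases "i = j")
      case False then show ?thesis by (simp add: Phi_def Mi)
    next
      case True
      have "L *v x - L *v y = f y - f x" using eq by (simp add: algebra_simps)
      then have "(L *v (x - y)) $ r = (f y - f x) $ r" by (simp add: matrix_vector_mult_diff_distrib)
      then have s: "(\<Sum>i\<in>UNIV. L $ r $ i * (x - y) $ i) = (f y - f x) $ r"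
        by (simp add: matrix_vector_mult_def)
      have "(\<Sum>i\<in>UNIV. L $ r $ i * (x - y) $ i) = L $ r $ j * (x - y) $ j + (\<Sum>i\<in>UNIV - {j}. L $ r $ i * (x - y) $ i)"
        by (rule sum.remove) auto
      also have "(\<Sum>i\<in>UNIV - {j}. L $ r $ i * (x - y) $ i) = (\<Sum>i'\<in>UNIV - {j}. (x - y) $ i' * M $ r $ i')"
        by (rule sum.cong) (auto simp: Mi)
      finally have "L $ r $ j = ((f y - f x) $ r - (\<Sum>i'\<in>UNIV - {j}. (x - y) $ i' * M $ r $ i')) / (x - y) $ j"
        using s j by (simp add: field_simps)
      then show ?thesis using True
        by (simp add: Phi_def X1 X2 radext_on_Sph[OF x] radext_on_Sph[OF y])
    qed
  qed
  show ?thesis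
    by (rule exI[of _ M]) (use j in \<open>simp add: X1 X2 Mj c0 PL\<close>)
qed



lemma negligible_Bad:
  fixes f :: "real^'n \<Rightarrow> real^'m"
  assumes m: "CARD('m) = 2 * CARD('n) - 1" and sm: "smooth_on (- {0}) (radext f)"
  shows "negligible (Bad f)"
proof -
  define F where "F = radext f"
  have Fd: "F differentiable (at y)" if "y \<noteq> 0" for y
    using sm that unfolding smooth_on_def F_def by (metis ComplI dd.simps(1) singletonD)
  have "\<forall>p :: 'n \<times> 'n. \<exists>ab :: ('n \<Rightarrow> 'm) \<times> ('n \<Rightarrow> 'm). inj (fst ab) \<and> inj (snd ab) \<and> fst ab (fst p) = snd ab (snd p)
      \<and> (\<forall>i i'. fst ab i = snd ab i' \<longrightarrow> i = fst p \<and> i' = snd p)"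
  proof
    fix p :: "'n \<times> 'n"
    obtain \<alpha> \<beta> :: "'n \<Rightarrow> 'm" where "inj \<alpha> \<and> inj \<beta> \<and> \<alpha> (fst p) = \<beta> (snd p) \<and> (\<forall>i i'. \<alpha> i = \<beta> i' \<longrightarrow> i = fst p \<and> i' = snd p)"
      using ab_exists[OF m] by blast
    then show "\<exists>ab :: ('n \<Rightarrow> 'm) \<times> ('n \<Rightarrow> 'm). inj (fst ab) \<and> inj (snd ab) \<and> fst ab (fst p) = snd ab (snd p)
      \<and> (\<forall>i i'. fst ab i = snd ab i' \<longrightarrow> i = fst p \<and> i' = snd p)"
      by (intro exI[of _ "(\<alpha>, \<beta>)"]) simp
  qed
  then obtain AB :: "'n \<times> 'n \<Rightarrow> ('n \<Rightarrow> 'm) \<times> ('n \<Rightarrow> 'm)" where AB: "\<And>p. inj (fst (AB p)) \<and> inj (snd (AB p)) \<and> fst (AB p) (fst p) = snd (AB p) (snd p)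
      \<and> (\<forall>i i'. fst (AB p) i = snd (AB p) i' \<longrightarrow> i = fst p \<and> i' = snd p)"
    by metis
  define A where "A k1 k2 = fst (AB (k1, k2))" for k1 k2
  define B where "B k1 k2 = snd (AB (k1, k2))" for k1 k2
  have ABp: "inj (A k1 k2)" "inj (B k1 k2)" "A k1 k2 k1 = B k1 k2 k2"
      "\<forall>i i'. A k1 k2 i = B k1 k2 i' \<longrightarrow> i = k1 \<and> i' = k2" for k1 k2
    using AB[of "(k1, k2)"] by (auto simp: A_def B_def)
  define S where "S = (\<lambda>(j, k1, k2, s1, s2). {M :: real^'n^'m.
      (XX (A k1 k2) k1 s1 j M - XX (B k1 k2) k2 s2 j M) $ j \<noteq> 0 \<and> M $ (A k1 k2 k1) $ j = 0})"
  define G where "G = (\<lambda>(j, k1, k2, s1, s2). Phi F (A k1 k2) (B k1 k2) j k1 s1 k2 s2 ` S (j, k1, k2, s1, s2))"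
  define I where "I = (UNIV :: 'n set) \<times> (UNIV :: 'n set) \<times> (UNIV :: 'n set) \<times> {-1, 1 :: real} \<times> {-1, 1 :: real}"
  have fI: "finite I" unfolding I_def by simp
  have negG: "negligible (G p)" if p: "p \<in> I" for p
  proof -
    obtain j k1 k2 s1 s2 where pe: "p = (j, k1, k2, s1, s2)" by (cases p) auto
    have s: "s1 \<noteq> 0" "s2 \<noteq> 0" using p pe by (auto simp: I_def)
    have Sp: "S p \<subseteq> {M. M \<bullet> axis (A k1 k2 k1) (axis j 1) = 0}"
      by (auto simp: S_def pe inner_axis)
    have hyp: "negligible {M :: real^'n^'m. M \<bullet> axis (A k1 k2 k1) (axis j 1) = 0}"
      by (rule negligible_standard_hyperplane) simp
    have nS: "negligible (S p)" by (rule negligible_subset[OF hyp Sp])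
    have dS: "Phi F (A k1 k2) (B k1 k2) j k1 s1 k2 s2 differentiable_on S p"
    proof (rule differentiable_at_imp_differentiable_on)
      fix M assume "M \<in> S p"
      then have u: "(XX (A k1 k2) k1 s1 j M - XX (B k1 k2) k2 s2 j M) $ j \<noteq> 0" by (simp add: S_def pe)
      show "Phi F (A k1 k2) (B k1 k2) j k1 s1 k2 s2 differentiable (at M)"
        by (rule differentiable_Phi[where F=F, OF Fd s u])
    qed
    show ?thesis unfolding pe G_def
      using negligible_differentiable_image_negligible[OF order_refl nS dS] by (simp add: pe)
  qed
  have cover: "Bad f \<subseteq> \<Union> (G ` I)"
  proof
    fix L assume "L \<in> Bad f"
    then obtain x y where xy: "x \<in> Sph" "y \<in> Sph" "x \<noteq> y" "f x + L *v x = f y + L *v y"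
      unfolding Bad_def by blast
    obtain j where j: "(x - y) $ j \<noteq> 0" using xy(3) by (metis vec_eq_iff zero_index right_minus_eq)
    have "x \<noteq> 0" "y \<noteq> 0" using xy(1,2) by auto
    then obtain k1 k2 where k1: "x $ k1 \<noteq> 0" and k2: "y $ k2 \<noteq> 0" by (metis vec_eq_iff zero_index)
    obtain M where M: "(XX (A k1 k2) k1 (sgn (x $ k1)) j M - XX (B k1 k2) k2 (sgn (y $ k2)) j M) $ j \<noteq> 0"
       "M $ A k1 k2 k1 $ j = 0" "Phi (radext f) (A k1 k2) (B k1 k2) j k1 (sgn (x $ k1)) k2 (sgn (y $ k2)) M = L"
      using cover_point[OF ABp(1,2,3,4) xy(1,2) j k1 k2 xy(4)] by blast
    have pI: "(j, k1, k2, sgn (x $ k1), sgn (y $ k2)) \<in> I"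
      using k1 k2 by (auto simp: I_def sgn_if)
    have "L \<in> G (j, k1, k2, sgn (x $ k1), sgn (y $ k2))"
      unfolding G_def S_def F_def using M by (auto intro!: image_eqI[of _ _ M])
    then show "L \<in> \<Union> (G ` I)" using pI by blast
  qed
  have "negligible (\<Union> (G ` I))" using fI negG by (intro negligible_Union) auto
  then show ?thesis by (rule negligible_subset[OF _ cover])
qed

lemma small_good_L:
  fixes f :: "real^'n \<Rightarrow> real^'m"
  assumes m: "CARD('m) = 2 * CARD('n) - 1" and sm: "smooth_on (- {0}) (radext f)" and e: "e > 0"
  shows "\<exists>L. norm L < e \<and> L \<notin> Bad f"
proof (rule ccontr)
  assume "\<not> ?thesis"
  then have "ball 0 e \<subseteq> Bad f" by auto
  moreover have "\<not> negligible (ball (0 :: real^'n^'m) e)"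
    using open_not_negligible[of "ball (0 :: real^'n^'m) e"] e by simp
  ultimately show False using negligible_subset negligible_Bad[OF m sm] by blast
qed



lemma matrix_norm_bound:
  fixes L :: "real^'n^'m"
  shows "norm (L *v w) \<le> (real CARD('m) * real CARD('n) * norm L) * norm w"
proof -
  have "norm (L *v w) \<le> onorm ((*v) L) * norm w"
    by (rule onorm[OF matrix_vector_mul_bounded_linear])
  also have "onorm ((*v) L) \<le> (\<Sum>i\<in>UNIV. \<Sum>j\<in>UNIV. \<bar>L $ i $ j\<bar>)"
    by (rule onorm_le_matrix_component_sum)
  also have "\<dots> \<le> (\<Sum>i\<in>(UNIV::'m set). \<Sum>j\<in>(UNIV::'n set). norm L)"
  proof (intro sum_mono)
    fix i j
    have "\<bar>L $ i $ j\<bar> \<le> norm (L $ i)" by (rule component_le_norm_cart)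
    also have "\<dots> \<le> norm L" by (rule Finite_Cartesian_Product.norm_nth_le)
    finally show "\<bar>L $ i $ j\<bar> \<le> norm L" .
  qed
  also have "\<dots> = real CARD('m) * real CARD('n) * norm L" by simp
  finally show ?thesis by (simp add: mult_right_mono)
qed

lemma topspace_Imm1: "topspace Imm1_top = Imm1"
proof -
  have op: "openin Imm1_top = imm_open" unfolding Imm1_top_def by (simp add: istopology_imm_open)
  have "imm_open Imm1" unfolding imm_open_def by (auto intro: exI[of _ 1])
  then have "openin Imm1_top Imm1" by (simp add: op)
  then have "Imm1 \<subseteq> topspace Imm1_top" by (rule openin_subset)
  moreover have "topspace Imm1_top \<subseteq> Imm1" unfolding topspace_def op imm_open_def by auto
  ultimately show ?thesis by blast
qed

lemma hmap0:
  assumes "\<forall>x. x \<notin> Sph \<longrightarrow> f x = 0"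
  shows "hmap f L 0 = f"
  using assms by (auto simp: hmap_def)

theorem proposition5:
  assumes "CARD('n::finite) \<ge> 2"
    and "CARD('m::finite) = 2 * CARD('n) - 1"
    and "(f, \<nu>) \<in> (Imm1 :: ((real^'n \<Rightarrow> real^'m) \<times> (real^'n \<Rightarrow> real^'m)) set)"
  shows "\<exists>h \<mu>. (h, \<mu>) \<in> Emb1 \<and> path_component_of Imm1_top (f, \<nu>) (h, \<mu>)"
proof -
  note fv = assms(3)
  have Z: "\<forall>x. x \<notin> Sph \<longrightarrow> f x = 0 \<and> \<nu> x = 0" and sm: "smooth_on (- {0}) (radext f)"
    using fv unfolding Imm1_iff by auto
  have Zf: "\<forall>x. x \<notin> Sph \<longrightarrow> f x = 0" using Z by auto
  obtain lam where lam: "lam > 0"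
    "\<And>L t. (\<forall>w. norm (L *v w) \<le> lam * norm w) \<Longrightarrow> t \<in> {0..1} \<Longrightarrow> (hmap f L t, \<nu>) \<in> Imm1"
    using imm_stable[OF assms(1) fv] by blast
  define e where "e = lam / (real CARD('m) * real CARD('n))"
  have e0: "e > 0" unfolding e_def using lam(1) by simp
  obtain L :: "real^'n^'m" where L: "norm L < e" "L \<notin> Bad f"
    using small_good_L[OF assms(2) sm e0] by blast
  have Lb: "norm (L *v w) \<le> lam * norm w" for w
  proof -
    have "real CARD('m) * real CARD('n) * norm L \<le> real CARD('m) * real CARD('n) * e"
      using L(1) by (intro mult_left_mono) auto
    also have "\<dots> = lam" unfolding e_def by simp
    finally have "real CARD('m) * real CARD('n) * norm L \<le> lam" .
    then have "(real CARD('m) * real CARD('n) * norm L) * norm w \<le> lam * norm w"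
      by (rule mult_right_mono) simp
    with matrix_norm_bound[of L w] show ?thesis by linarith
  qed
  define g where "g t = (hmap f L t, \<nu>)" for t
  have gI: "g t \<in> Imm1" if "t \<in> {0..1}" for t unfolding g_def using lam(2)[OF _ that] Lb by blast
  obtain a :: 'n where True by blast
  have Sne: "Sph \<noteq> ({} :: (real^'n) set)"
  proof -
    have "axis a 1 \<in> (Sph :: (real^'n) set)" by simp
    then show ?thesis by blast
  qed
  have dist_bound: "imm_dist (g s) (g t) \<le> 2 * lam * \<bar>s - t\<bar>" for s t
  proof -
    have b1: "(SUP x\<in>Sph. norm (fst (g s) x - fst (g t) x)) \<le> lam * \<bar>s - t\<bar>"
    proof (rule cSUP_least[OF Sne])
      fix x :: "real^'n" assume x: "x \<in> Sph"
      have "fst (g s) x - fst (g t) x = (s - t) *\<^sub>R (L *v x)"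
        using x by (simp add: g_def hmap_def algebra_simps)
      then have "norm (fst (g s) x - fst (g t) x) = \<bar>s - t\<bar> * norm (L *v x)" by simp
      also have "\<dots> \<le> \<bar>s - t\<bar> * (lam * norm x)" by (intro mult_left_mono Lb) auto
      finally show "norm (fst (g s) x - fst (g t) x) \<le> lam * \<bar>s - t\<bar>" using x by (simp add: mult.commute)
    qed
    have ne2: "{(x, v). x \<in> (Sph :: (real^'n) set) \<and> v \<in> tangent x \<and> norm v \<le> 1} \<noteq> {}"
    proof -
      have "(axis a 1, 0) \<in> {(x, v). x \<in> (Sph :: (real^'n) set) \<and> v \<in> tangent x \<and> norm v \<le> 1}"
        by (simp add: tangent_def)
      then show ?thesis by blast
    qed
    have b2: "(SUP xv\<in>{(x, v). x \<in> Sph \<and> v \<in> tangent x \<and> norm v \<le> 1}.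
        norm (dmap (fst (g s)) (fst xv) (snd xv) - dmap (fst (g t)) (fst xv) (snd xv))) \<le> lam * \<bar>s - t\<bar>"
    proof (rule cSUP_least[OF ne2])
      fix xv :: "(real^'n) \<times> (real^'n)" assume "xv \<in> {(x, v). x \<in> Sph \<and> v \<in> tangent x \<and> norm v \<le> 1}"
      then obtain x v where xv: "xv = (x, v)" "x \<in> Sph" "v \<in> tangent x" "norm v \<le> 1" by auto
      have "dmap (fst (g s)) x v - dmap (fst (g t)) x v = (s - t) *\<^sub>R (L *v v)"
        using dmap_hmap[OF Zf sm xv(2,3)] by (simp add: g_def algebra_simps)
      then have "norm (dmap (fst (g s)) x v - dmap (fst (g t)) x v) = \<bar>s - t\<bar> * norm (L *v v)" by simp
      also have "\<dots> \<le> \<bar>s - t\<bar> * (lam * norm v)" by (intro mult_left_mono Lb) auto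
      also have "\<dots> \<le> \<bar>s - t\<bar> * (lam * 1)" using xv(4) lam(1) by (intro mult_left_mono) auto
      finally show "norm (dmap (fst (g s)) (fst xv) (snd xv) - dmap (fst (g t)) (fst xv) (snd xv)) \<le> lam * \<bar>s - t\<bar>"
        using xv(1) by (simp add: mult.commute)
    qed
    have b3: "(SUP x\<in>Sph. norm (snd (g s) x - snd (g t) x)) \<le> 0"
      by (rule cSUP_least[OF Sne]) (simp add: g_def)
    show ?thesis unfolding imm_dist_def using b1 b2 b3 by linarith
  qed
  have path: "pathin Imm1_top g"
    unfolding pathin_def continuous_map topspace_Imm1
  proof (intro conjI allI impI)
    show "g ` topspace (subtopology euclideanreal {0..1}) \<subseteq> Imm1" using gI by auto
  next
    fix U :: "((real^'n \<Rightarrow> real^'m) \<times> (real^'n \<Rightarrow> real^'m)) set" assume "openin Imm1_top U"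
    then have U: "imm_open U" unfolding Imm1_top_def by (simp add: istopology_imm_open)
    show "openin (subtopology euclideanreal {0..1}) {x \<in> topspace (subtopology euclideanreal {0..1}). g x \<in> U}"
      unfolding openin_euclidean_subtopology_iff topspace_euclidean_subtopology
    proof (intro conjI ballI)
      show "{x \<in> {0..1}. g x \<in> U} \<subseteq> {0..1}" by auto
    next
      fix t assume t: "t \<in> {x \<in> {0..1}. g x \<in> U}"
      then obtain e0 where e0: "e0 > 0" "\<forall>q\<in>Imm1. imm_dist q (g t) < e0 \<longrightarrow> q \<in> U"
        using U unfolding imm_open_def by blast
      define d where "d = e0 / (2 * lam + 1)"
      have d0: "d > 0" unfolding d_def using e0 lam by simp
      show "\<exists>e>0. \<forall>x'\<in>{0..1}. dist x' t < e \<longrightarrow> x' \<in> {x \<in> {0..1}. g x \<in> U}"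
      proof (intro exI[of _ d] conjI ballI impI)
        fix s :: real assume s: "s \<in> {0..1}" and ds: "dist s t < d"
        have "imm_dist (g s) (g t) \<le> 2 * lam * \<bar>s - t\<bar>" by (rule dist_bound)
        also have "\<dots> \<le> (2 * lam + 1) * \<bar>s - t\<bar>" by (intro mult_right_mono) auto
        also have "\<dots> < (2 * lam + 1) * d" using ds lam(1) by (intro mult_strict_left_mono) (auto simp: dist_real_def)
        also have "\<dots> = e0" unfolding d_def using lam(1) by simp
        finally have "imm_dist (g s) (g t) < e0" .
        then have "g s \<in> U" using e0(2) gI[OF s] by blast
        then show "s \<in> {x \<in> {0..1}. g x \<in> U}" using s by blast
      qed (rule d0)
    qed
  qed
  have g0: "g 0 = (f, \<nu>)" unfolding g_def by (simp add: hmap0[OF Zf])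
  have inj: "inj_on (hmap f L 1) Sph"
  proof (rule inj_onI)
    fix x y assume x: "x \<in> Sph" and y: "y \<in> Sph" and e: "hmap f L 1 x = hmap f L 1 y"
    then have "f x + L *v x = f y + L *v y" by (simp add: hmap_def)
    then show "x = y" using L(2) x y unfolding Bad_def by blast
  qed
  have g1: "g 1 \<in> Emb1" unfolding Emb1_def using gI[of 1] inj by (simp add: g_def)
  show ?thesis
    by (rule exI[of _ "hmap f L 1"], rule exI[of _ \<nu>])
       (use g1 path g0 in \<open>auto simp: path_component_of_def g_def intro!: exI[of _ g]\<close>)
qed


end
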